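(* For every $k\in\mathbb{Z}^+$, the measure $d\mu(z)=|z_1|^{2k-2}\,dV(z_1,z_2)$ is a Carleson measure of $A^2(\mathbb{H}_k)$ but not a vanishing Carleson measure.
   Context: $\mathbb{H}_k=\{(z_1,z_2)\in\mathbb{C}^2:|z_1|^k<|z_2|<1\}$, $dV$ Lebesgue measure, $A^2(\mathbb{H}_k)$ the holomorphic $dV$-square-integrable functions. A non-negative finite Borel measure $\mu$ is a Carleson measure if the inclusion $A^2(\mathbb{H}_k)\hookrightarrow L^2(\mathbb{H}_k,\mu)$ is bounded, and vanishing if it is compact. *)

theory Defs
  imports "HOL-Analysis.Analysis"
begin

definition Hk :: "nat \<Rightarrow> (complex \<times> complex) set" where
  "Hk k = {z. norm (fst z) ^ k < norm (snd z) \<and> norm (snd z) < 1}"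

definition holo2 :: "(complex \<times> complex \<Rightarrow> complex) \<Rightarrow> (complex \<times> complex) set \<Rightarrow> bool" where
  "holo2 f U \<longleftrightarrow> (\<forall>z\<in>U. \<exists>a b. (f has_derivative (\<lambda>h. a * fst h + b * snd h)) (at z))"

definition L2sq :: "nat \<Rightarrow> (complex \<times> complex) measure \<Rightarrow> (complex \<times> complex \<Rightarrow> complex) \<Rightarrow> ennreal" where
  "L2sq k M f = (\<integral>\<^sup>+ z\<in>Hk k. ennreal (norm (f z) ^ 2) \<partial>M)"

definition bergman :: "nat \<Rightarrow> (complex \<times> complex \<Rightarrow> complex) set" where
  "bergman k = {f. holo2 f (Hk k) \<and> L2sq k lebesgue f < \<infinity>}"

definition carleson :: "nat \<Rightarrow> (complex \<times> complex) measure \<Rightarrow> bool" where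
  "carleson k \<mu> \<longleftrightarrow>
     (\<exists>C::real. \<forall>f\<in>bergman k. L2sq k \<mu> f \<le> ennreal C * L2sq k lebesgue f)"

text \<open>Vanishing Carleson measure: the inclusion is compact, i.e. (bounded and) the image of
  the unit ball of A^2 is relatively compact in the complete space L^2(mu): every sequence in
  the unit ball has a subsequence which is Cauchy in L^2(mu).\<close>
definition vanishing_carleson :: "nat \<Rightarrow> (complex \<times> complex) measure \<Rightarrow> bool" where
  "vanishing_carleson k \<mu> \<longleftrightarrow> carleson k \<mu> \<and>
     (\<forall>f :: nat \<Rightarrow> complex \<times> complex \<Rightarrow> complex.
        (\<forall>n. f n \<in> bergman k \<and> L2sq k lebesgue (f n) \<le> 1) \<longrightarrow>
        (\<exists>r::nat \<Rightarrow> nat. strict_mono r \<and>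
           (\<forall>e::real>0. \<exists>N. \<forall>m\<ge>N. \<forall>n\<ge>N.
              L2sq k \<mu> (\<lambda>z. f (r m) z - f (r n) z) < ennreal e)))"

end

theory Submission imports Defs begin

lemma open_Hk: "open (Hk k)"
proof -
  have "Hk k = {z. norm (fst z) ^ k < norm (snd z)} \<inter> {z. norm (snd z) < 1}"
    by (auto simp: Hk_def)
  moreover have "open {z::complex\<times>complex. norm (fst z) ^ k < norm (snd z)}"
    by (intro open_Collect_less continuous_intros)
  moreover have "open {z::complex\<times>complex. norm (snd z) < 1}"
    by (intro open_Collect_less continuous_intros)
  ultimately show ?thesis by auto
qed

lemma Hk_sets[measurable]: "Hk k \<in> sets borel"
  using open_Hk by auto

lemma meas_cont:
  fixes \<phi> :: "'a::topological_space \<Rightarrow> real"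
  assumes "continuous_on UNIV \<phi>" and [measurable]: "S \<in> sets borel"
  shows "(\<lambda>z. ennreal (\<phi> z) * indicator S z) \<in> borel_measurable borel"
proof -
  have [measurable]: "\<phi> \<in> borel_measurable borel" using assms(1) by (rule borel_measurable_continuous_onI)
  show ?thesis by measurable
qed

lemma ballprod_sets: "ball (a::'a::euclidean_space) r \<times> ball (b::'b::euclidean_space) s \<in> sets borel"
  by (intro borel_open open_Times) auto

lemma prod_int:
  fixes \<phi> :: "complex \<Rightarrow> real" and S1 S2 :: "complex set"
  assumes [measurable]: "\<phi> \<in> borel_measurable borel" "S1 \<in> sets borel" "S2 \<in> sets borel"
  shows "(\<integral>\<^sup>+ z. ennreal (\<phi> (snd z)) * indicator (S1 \<times> S2) z \<partial>lborel)
       = emeasure lborel S1 * (\<integral>\<^sup>+ y. ennreal (\<phi> y) * indicator S2 y \<partial>lborel)"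
proof -
  have "(\<integral>\<^sup>+ z. ennreal (\<phi> (snd z)) * indicator (S1 \<times> S2) z \<partial>(lborel::(complex\<times>complex) measure))
     = (\<integral>\<^sup>+ z. ennreal (\<phi> (snd z)) * indicator (S1 \<times> S2) z \<partial>(lborel \<Otimes>\<^sub>M lborel))"
    by (simp add: lborel_prod)
  also have "\<dots> = (\<integral>\<^sup>+ x. \<integral>\<^sup>+ y. ennreal (\<phi> y) * indicator (S1 \<times> S2) (x,y) \<partial>lborel \<partial>lborel)"
    by (subst lborel.nn_integral_fst[symmetric]) auto
  also have "\<dots> = (\<integral>\<^sup>+ x. (\<integral>\<^sup>+ y. ennreal (\<phi> y) * indicator S2 y \<partial>lborel) * indicator S1 x \<partial>lborel)"
    apply (rule nn_integral_cong)
    apply (subst nn_integral_multc[symmetric])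
     apply auto
    apply (rule nn_integral_cong)
    apply (auto simp: indicator_def)
    done
  also have "\<dots> = emeasure lborel S1 * (\<integral>\<^sup>+ y. ennreal (\<phi> y) * indicator S2 y \<partial>lborel)"
    using nn_integral_cmult_indicator[of S1 lborel "\<integral>\<^sup>+ y. ennreal (\<phi> y) * indicator S2 y \<partial>lborel"]
    by (simp add: mult.commute)
  finally show ?thesis .
qed

definition HH :: "nat \<Rightarrow> (complex\<times>complex) set" where
  "HH k = Hk k \<inter> {z. 1/2 \<le> norm (fst z)}"

lemma HH_sets[measurable]: "HH k \<in> sets borel"
proof -
  have "closed {z::complex\<times>complex. 1/2 \<le> norm (fst z)}"
    by (intro closed_Collect_le continuous_intros)
  thus ?thesis unfolding HH_def by auto
qed

definition aa :: "nat \<Rightarrow> nat \<Rightarrow> ennreal" where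
  "aa k m = (\<integral>\<^sup>+ z. ennreal (norm (snd z) ^ (2*m)) * indicator (Hk k) z \<partial>lborel)"
definition mm :: "nat \<Rightarrow> nat \<Rightarrow> ennreal" where
  "mm k m = (\<integral>\<^sup>+ z. ennreal (norm (fst z) ^ (2*k-2) * norm (snd z) ^ (2*m)) * indicator (Hk k) z \<partial>lborel)"
definition RR :: "nat \<Rightarrow> nat \<Rightarrow> ennreal" where
  "RR k m = (\<integral>\<^sup>+ z. ennreal (norm (snd z) ^ (2*m)) * indicator (HH k) z \<partial>lborel)"
definition Ann :: "real \<Rightarrow> complex set" where
  "Ann r = {y. r < norm y \<and> norm y < 1}"
definition II :: "nat \<Rightarrow> ennreal" where
  "II m = (\<integral>\<^sup>+ y. ennreal (norm y ^ (2*m)) * indicator (ball (0::complex) 1) y \<partial>lborel)"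
definition JJ :: "real \<Rightarrow> nat \<Rightarrow> ennreal" where
  "JJ r m = (\<integral>\<^sup>+ y. ennreal (norm y ^ (2*m)) * indicator (Ann r) y \<partial>lborel)"

lemma Ann_sets[measurable]: "Ann r \<in> sets borel"
proof -
  have "open (Ann r)" unfolding Ann_def
    by (intro open_Collect_conj open_Collect_less continuous_intros)
  thus ?thesis by auto
qed

lemma s1: "aa k m \<le> emeasure lborel (ball (0::complex) (1/2)) * II m + RR k m"
proof -
  have "aa k m \<le> (\<integral>\<^sup>+ z. ennreal (norm (snd z) ^ (2*m)) * indicator (ball (0::complex) (1/2) \<times> ball (0::complex) 1) z
     + ennreal (norm (snd z) ^ (2*m)) * indicator (HH k) z \<partial>lborel)"
    unfolding aa_def
    by (rule nn_integral_mono) (auto simp: indicator_def Hk_def HH_def dist_norm)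
  also have "\<dots> = (\<integral>\<^sup>+ z. ennreal (norm (snd z) ^ (2*m)) * indicator (ball (0::complex) (1/2) \<times> ball (0::complex) 1) z \<partial>lborel)
     + RR k m"
    unfolding RR_def by (subst nn_integral_add) (auto intro!: meas_cont continuous_intros HH_sets Hk_sets ballprod_sets)
  also have "(\<integral>\<^sup>+ z. ennreal (norm (snd z) ^ (2*m)) * indicator (ball (0::complex) (1/2) \<times> ball (0::complex) 1) z \<partial>lborel)
     = emeasure lborel (ball (0::complex) (1/2)) * II m"
    unfolding II_def by (rule prod_int) auto
  finally show ?thesis .
qed

lemma s2: "ennreal ((1/2) ^ (2*k-2)) * RR k m \<le> mm k m"
proof -
  have "ennreal ((1/2) ^ (2*k-2)) * RR k m = (\<integral>\<^sup>+ z. ennreal ((1/2) ^ (2*k-2)) * (ennreal (norm (snd z) ^ (2*m)) * indicator (HH k) z) \<partial>lborel)"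
    unfolding RR_def by (rule nn_integral_cmult[symmetric]) (auto intro!: meas_cont continuous_intros HH_sets Hk_sets ballprod_sets)
  also have "\<dots> \<le> mm k m" unfolding mm_def
  proof (rule nn_integral_mono)
    fix z :: "complex \<times> complex"
    show "ennreal ((1/2) ^ (2*k-2)) * (ennreal (norm (snd z) ^ (2*m)) * indicator (HH k) z)
       \<le> ennreal (norm (fst z) ^ (2*k-2) * norm (snd z) ^ (2*m)) * indicator (Hk k) z"
    proof (cases "z \<in> HH k")
      case True
      hence T: "z \<in> HH k" "z \<in> Hk k" "1/2 \<le> norm (fst z)" by (auto simp: HH_def)
      have "(1/2::real) ^ (2*k-2) \<le> norm (fst z) ^ (2*k-2)"
        using T by (intro power_mono) auto
      hence "(1/2::real) ^ (2*k-2) * norm (snd z) ^ (2*m) \<le> norm (fst z) ^ (2*k-2) * norm (snd z) ^ (2*m)"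
        by (intro mult_right_mono) auto
      thus ?thesis using T by (simp add: ennreal_mult'[symmetric])
    qed (auto simp: indicator_def)
  qed
  finally show ?thesis .
qed

lemma s3:
  assumes "k \<ge> 1"
  shows "emeasure lborel (ball (5/8::complex) (1/8)) * JJ ((3/4)^k) m \<le> RR k m"
proof -
  have "emeasure lborel (ball (5/8::complex) (1/8)) * JJ ((3/4)^k) m =
    (\<integral>\<^sup>+ z. ennreal (norm (snd z) ^ (2*m)) * indicator (ball (5/8::complex) (1/8) \<times> Ann ((3/4)^k)) z \<partial>lborel)"
    unfolding JJ_def by (rule prod_int[symmetric]) auto
  also have "\<dots> \<le> RR k m" unfolding RR_def
  proof (rule nn_integral_mono)
    fix z :: "complex \<times> complex"
    show "ennreal (norm (snd z) ^ (2*m)) * indicator (ball (5/8::complex) (1/8) \<times> Ann ((3/4)^k)) z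
       \<le> ennreal (norm (snd z) ^ (2*m)) * indicator (HH k) z"
    proof (cases "z \<in> ball (5/8::complex) (1/8) \<times> Ann ((3/4)^k)")
      case True
      then have d: "norm (fst z - 5/8) < 1/8" and an: "(3/4)^k < norm (snd z)" "norm (snd z) < 1"
        by (auto simp: dist_norm Ann_def norm_minus_commute mem_Times_iff)
      have "norm (fst z) \<le> norm (fst z - 5/8) + norm (5/8::complex)"
        by (metis diff_add_cancel norm_triangle_ineq)
      hence lt: "norm (fst z) < 3/4" using d by simp
      have "norm (5/8::complex) \<le> norm (fst z) + norm (fst z - 5/8)"
        by (metis add_diff_cancel_left' diff_diff_eq2 norm_minus_commute norm_triangle_ineq4 order.trans order_refl)
      hence ge: "1/2 \<le> norm (fst z)" using d by simp
      have "norm (fst z) ^ k < (3/4)^k"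
        using lt assms by (intro power_strict_mono) auto
      hence "z \<in> HH k" using an ge by (auto simp: Hk_def HH_def)
      thus ?thesis using True by simp
    qed (auto simp: indicator_def)
  qed
  finally show ?thesis .
qed

lemma s5:
  assumes "0 \<le> \<rho>"
  shows "II m \<le> ennreal (\<rho> ^ (2*m)) * emeasure lborel (ball (0::complex) 1) + JJ \<rho> m"
proof -
  have "II m \<le> (\<integral>\<^sup>+ y. ennreal (\<rho> ^ (2*m)) * indicator (ball (0::complex) 1) y
            + ennreal (norm y ^ (2*m)) * indicator (Ann \<rho>) y \<partial>lborel)"
    unfolding II_def
  proof (rule nn_integral_mono)
    fix y :: complex
    show "ennreal (norm y ^ (2*m)) * indicator (ball 0 1) y \<le> ennreal (\<rho> ^ (2*m)) * indicator (ball (0::complex) 1) y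
            + ennreal (norm y ^ (2*m)) * indicator (Ann \<rho>) y"
    proof (cases "norm y \<le> \<rho>")
      case True
      hence "norm y ^ (2*m) \<le> \<rho> ^ (2*m)" by (intro power_mono) auto
      thus ?thesis by (auto simp: indicator_def intro: add_increasing2)
    next
      case False
      thus ?thesis by (auto simp: indicator_def Ann_def dist_norm)
    qed
  qed
  also have "\<dots> = ennreal (\<rho> ^ (2*m)) * emeasure lborel (ball (0::complex) 1) + JJ \<rho> m"
    unfolding JJ_def
    by (subst nn_integral_add) (auto intro!: meas_cont continuous_intros Ann_sets simp: nn_integral_cmult_indicator)
  finally show ?thesis .
qed

lemma s6:
  assumes "\<rho> \<le> t" "0 \<le> t" "t < 1"
  shows "ennreal (t ^ (2*m)) * emeasure lborel (ball (complex_of_real ((1+t)/2)) ((1-t)/2)) \<le> JJ \<rho> m"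
proof -
  have "ennreal (t ^ (2*m)) * emeasure lborel (ball (complex_of_real ((1+t)/2)) ((1-t)/2))
     = (\<integral>\<^sup>+ y. ennreal (t ^ (2*m)) * indicator (ball (complex_of_real ((1+t)/2)) ((1-t)/2)) y \<partial>lborel)"
    by (simp add: nn_integral_cmult_indicator)
  also have "\<dots> \<le> JJ \<rho> m" unfolding JJ_def
  proof (rule nn_integral_mono)
    fix y :: complex
    show "ennreal (t ^ (2*m)) * indicator (ball (complex_of_real ((1+t)/2)) ((1-t)/2)) y
       \<le> ennreal (norm y ^ (2*m)) * indicator (Ann \<rho>) y"
    proof (cases "y \<in> ball (complex_of_real ((1+t)/2)) ((1-t)/2)")
      case True
      define c where "c = complex_of_real ((1+t)/2)"
      have d: "norm (y - c) < (1-t)/2"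
        using True by (auto simp: dist_norm norm_minus_commute c_def)
      have n: "norm c = (1+t)/2" using assms unfolding c_def by (subst norm_of_real) simp
      have "norm y \<le> norm (y - c) + norm c"
        by (metis diff_add_cancel norm_triangle_ineq)
      hence lt: "norm y < 1" using d n by (simp add: field_simps)
      have "norm c \<le> norm y + norm (y - c)"
        by (metis add_diff_cancel_left' diff_diff_eq2 norm_minus_commute norm_triangle_ineq4 order.trans order_refl)
      hence gt: "t < norm y" using d n by (simp add: field_simps)
      have "t ^ (2*m) \<le> norm y ^ (2*m)" using gt assms by (intro power_mono) auto
      moreover have "y \<in> Ann \<rho>" using lt gt assms by (auto simp: Ann_def)
      ultimately show ?thesis using True by auto
    qed auto
  qed
  finally show ?thesis .
qed

lemma ball_meas_pos: "r > 0 \<Longrightarrow> 0 < emeasure lborel (ball (c::complex) r)"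
  by (simp add: emeasure_ball)

lemma ball_meas_eq: "emeasure lborel (ball (c::complex) r) = ennreal (measure lborel (ball c r))"
  using emeasure_lborel_ball_finite[of c r] by (simp add: emeasure_eq_ennreal_measure)

lemma RR_le_aa: "RR k m \<le> aa k m"
  unfolding RR_def aa_def by (rule nn_integral_mono) (auto simp: indicator_def HH_def)

lemma Hk_bounded: "k \<ge> 1 \<Longrightarrow> bounded (Hk k)"
proof -
  assume k: "k \<ge> 1"
  have "Hk k \<subseteq> cball (0::complex) 1 \<times> cball (0::complex) 1"
  proof
    fix z assume z: "z \<in> Hk k"
    hence a: "norm (fst z) ^ k < norm (snd z)" "norm (snd z) < 1" by (auto simp: Hk_def)
    have "norm (fst z) \<le> 1"
    proof (rule ccontr)
      assume "\<not> norm (fst z) \<le> 1"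
      hence "1 \<le> norm (fst z) ^ k" by (intro one_le_power) auto
      thus False using a by simp
    qed
    thus "z \<in> cball 0 1 \<times> cball 0 1" using a by (cases z) auto
  qed
  thus ?thesis by (rule bounded_subset[rotated]) (intro bounded_Times bounded_cball)
qed

lemma aa_finite: "k \<ge> 1 \<Longrightarrow> aa k m < \<infinity>"
proof -
  assume k: "k \<ge> 1"
  have "aa k m \<le> (\<integral>\<^sup>+ z. indicator (Hk k) z \<partial>lborel)"
    unfolding aa_def by (rule nn_integral_mono) (auto simp: indicator_def Hk_def intro!: power_le_one)
  also have "\<dots> = emeasure lborel (Hk k)" by simp
  also have "\<dots> < \<infinity>" using Hk_bounded[OF k] by (rule emeasure_bounded_finite)
  finally show ?thesis .
qed

lemma aa_lower:
  assumes "k \<ge> 1" "(3/4)^k \<le> t" "t < 1"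
  shows "emeasure lborel (ball (5/8::complex) (1/8)) * (ennreal (t ^ (2*m)) * emeasure lborel (ball (complex_of_real ((1+t)/2)) ((1-t)/2))) \<le> aa k m"
proof -
  have "0 \<le> t" using assms(2) zero_le_power[of "3/4::real" k] by linarith
  hence "emeasure lborel (ball (5/8::complex) (1/8)) * (ennreal (t ^ (2*m)) * emeasure lborel (ball (complex_of_real ((1+t)/2)) ((1-t)/2)))
     \<le> emeasure lborel (ball (5/8::complex) (1/8)) * JJ ((3/4)^k) m"
    using assms by (intro mult_left_mono s6) auto
  also have "\<dots> \<le> RR k m" using s3 assms by blast
  also have "\<dots> \<le> aa k m" by (rule RR_le_aa)
  finally show ?thesis .
qed

lemma key:
  assumes k: "k \<ge> 1"
  shows "\<exists>K N0. K < \<infinity> \<and> (\<forall>m\<ge>N0. aa k m \<le> K * mm k m)"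
proof -
  define \<rho> :: real where "\<rho> = (3/4)^k"
  define t where "t = (1+\<rho>)/2"
  have \<rho>0: "0 < \<rho>" unfolding \<rho>_def by simp
  have \<rho>1: "\<rho> \<le> 3/4" unfolding \<rho>_def using power_decreasing[OF k, of "3/4::real"] by simp
  have t1: "\<rho> < t" "t < 1" "0 < t" using \<rho>0 \<rho>1 unfolding t_def by auto
  define d where "d = measure lborel (ball (0::complex) 1)"
  define e where "e = measure lborel (ball (complex_of_real ((1+t)/2)) ((1-t)/2))"
  define \<alpha> where "\<alpha> = measure lborel (ball (5/8::complex) (1/8))"
  define \<beta> where "\<beta> = measure lborel (ball (0::complex) (1/2))"
  have dE: "emeasure lborel (ball (0::complex) 1) = ennreal d" unfolding d_def by (rule ball_meas_eq)
  have eE: "emeasure lborel (ball (complex_of_real ((1+t)/2)) ((1-t)/2)) = ennreal e" unfolding e_def by (rule ball_meas_eq)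
  have aE: "emeasure lborel (ball (5/8::complex) (1/8)) = ennreal \<alpha>" unfolding \<alpha>_def by (rule ball_meas_eq)
  have bE: "emeasure lborel (ball (0::complex) (1/2)) = ennreal \<beta>" unfolding \<beta>_def by (rule ball_meas_eq)
  have e0: "0 < e" using ball_meas_pos[of "(1-t)/2" "complex_of_real ((1+t)/2)"] t1 eE by auto
  have a0: "0 < \<alpha>" using ball_meas_pos[of "1/8" "5/8::complex"] aE by auto
  have d0: "0 \<le> d" unfolding d_def by simp
  have "(\<lambda>m. d * ((\<rho>/t)^2) ^ m) \<longlonglongrightarrow> d * 0"
    using \<rho>0 t1 by (intro tendsto_intros) (auto simp: power_less_one_iff abs_of_pos)
  hence "eventually (\<lambda>m. d * ((\<rho>/t)^2) ^ m < e) sequentially"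
    using e0 by (intro order_tendstoD) auto
  then obtain N0 where N0: "\<And>m. m \<ge> N0 \<Longrightarrow> d * ((\<rho>/t)^2) ^ m < e"
    by (auto simp: eventually_sequentially)
  define K where "K = ennreal ((2 * \<beta> / \<alpha> + 1) * 2 ^ (2*k-2))"
  have "\<forall>m\<ge>N0. aa k m \<le> K * mm k m"
  proof (intro allI impI)
    fix m assume m: "m \<ge> N0"
    have pw: "((\<rho>/t)^2) ^ m = \<rho> ^ (2*m) / t ^ (2*m)"
      by (simp add: power_mult[symmetric] power_divide)
    have "\<rho> ^ (2*m) * d = t ^ (2*m) * (d * ((\<rho>/t)^2) ^ m)"
      unfolding pw using t1 by (simp add: field_simps)
    also have "\<dots> \<le> t ^ (2*m) * e"
      using N0[OF m] t1 by (intro mult_left_mono) auto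
    finally have le1: "\<rho> ^ (2*m) * d \<le> t ^ (2*m) * e" .
    have JJ1: "ennreal (t ^ (2*m) * e) \<le> JJ \<rho> m"
      using s6[of \<rho> t m] t1 eE e0 by (simp add: ennreal_mult)
    have "II m \<le> ennreal (\<rho> ^ (2*m)) * ennreal d + JJ \<rho> m"
      using s5[of \<rho> m] \<rho>0 dE by simp
    also have "\<dots> = ennreal (\<rho> ^ (2*m) * d) + JJ \<rho> m"
      using \<rho>0 d0 by (simp add: ennreal_mult)
    also have "\<dots> \<le> ennreal (t ^ (2*m) * e) + JJ \<rho> m"
      using le1 by (intro add_right_mono ennreal_leI)
    also have "\<dots> \<le> JJ \<rho> m + JJ \<rho> m"
      using JJ1 by (intro add_right_mono)
    finally have II2: "II m \<le> 2 * JJ \<rho> m" by (simp add: mult_2)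
    have "ennreal \<alpha> * JJ \<rho> m \<le> RR k m" using s3[OF k, of m] aE \<rho>_def by simp
    hence "ennreal (1/\<alpha>) * (ennreal \<alpha> * JJ \<rho> m) \<le> ennreal (1/\<alpha>) * RR k m"
      by (intro mult_left_mono) auto
    hence JR: "JJ \<rho> m \<le> ennreal (1/\<alpha>) * RR k m"
      using a0 by (simp add: mult.assoc[symmetric] ennreal_mult[symmetric])
    have "ennreal (2^(2*k-2)) * (ennreal ((1/2) ^ (2*k-2)) * RR k m) \<le> ennreal (2^(2*k-2)) * mm k m"
      using s2[of k m] by (intro mult_left_mono) auto
    hence Rm: "RR k m \<le> ennreal (2^(2*k-2)) * mm k m"
      by (simp add: mult.assoc[symmetric] ennreal_mult[symmetric] power_mult_distrib[symmetric])
    have "aa k m \<le> ennreal \<beta> * II m + RR k m" using s1[of k m] bE by simp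
    also have "\<dots> \<le> ennreal \<beta> * (2 * (ennreal (1/\<alpha>) * RR k m)) + RR k m"
      using II2 JR by (intro add_right_mono mult_left_mono order.trans[OF II2]) auto
    also have "\<dots> = ennreal (2 * \<beta> / \<alpha> + 1) * RR k m"
    proof -
      have b0: "0 \<le> \<beta>" unfolding \<beta>_def by simp
      have e2: "ennreal (2*(1/\<alpha>)) = 2 * ennreal (1/\<alpha>)"
        using a0 ennreal_mult[of 2 "1/\<alpha>"] by simp
      have "ennreal (2 * \<beta> / \<alpha>) = ennreal (\<beta> * (2 * (1/\<alpha>)))" by (simp add: mult.commute)
      also have "\<dots> = ennreal \<beta> * ennreal (2 * (1/\<alpha>))" using a0 b0 by (intro ennreal_mult) auto
      finally have "ennreal \<beta> * (2 * ennreal (1/\<alpha>)) = ennreal (2 * \<beta> / \<alpha>)" using e2 by simp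
      moreover have "ennreal (2 * \<beta> / \<alpha> + 1) = ennreal (2 * \<beta> / \<alpha>) + 1"
        using a0 b0 by (subst ennreal_plus) auto
      ultimately show ?thesis
        by (metis (no_types, lifting) mult.assoc distrib_right mult_1)
    qed
    also have "\<dots> \<le> ennreal (2 * \<beta> / \<alpha> + 1) * (ennreal (2^(2*k-2)) * mm k m)"
      using Rm by (intro mult_left_mono) auto
    also have "\<dots> = K * mm k m"
      unfolding K_def using a0 by (simp add: mult.assoc ennreal_mult \<beta>_def)
    finally show "aa k m \<le> K * mm k m" .
  qed
  moreover have "K < \<infinity>" unfolding K_def by simp
  ultimately show ?thesis by blast
qed

lemma meas_leb: "g \<in> borel_measurable borel \<Longrightarrow> g \<in> borel_measurable lebesgue"
  by (rule measurable_completion) simp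

lemma L2sq_leb: "L2sq k lebesgue f = (\<integral>\<^sup>+ z. ennreal (norm (f z)^2) * indicator (Hk k) z \<partial>lborel)"
  unfolding L2sq_def by (rule nn_integral_completion)

lemma W_meas: "(\<lambda>z::complex\<times>complex. indicator (Hk k) z * ennreal (norm (fst z) ^ (2 * k - 2))) \<in> borel_measurable borel"
proof -
  have "(\<lambda>z::complex\<times>complex. ennreal (norm (fst z) ^ (2 * k - 2)) * indicator (Hk k) z) \<in> borel_measurable borel"
    by (intro meas_cont continuous_intros Hk_sets)
  thus ?thesis by (simp add: mult.commute)
qed

lemma L2sq_mu:
  assumes "(\<lambda>z. ennreal (norm (f z)^2) * indicator (Hk k) z) \<in> borel_measurable borel"
  shows "L2sq k (density lebesgue (\<lambda>z. indicator (Hk k) z * ennreal (norm (fst z) ^ (2 * k - 2)))) f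
     = (\<integral>\<^sup>+ z. ennreal (norm (fst z) ^ (2*k-2)) * (ennreal (norm (f z)^2) * indicator (Hk k) z) \<partial>lborel)"
proof -
  have "L2sq k (density lebesgue (\<lambda>z. indicator (Hk k) z * ennreal (norm (fst z) ^ (2 * k - 2)))) f
     = (\<integral>\<^sup>+ z. (indicator (Hk k) z * ennreal (norm (fst z) ^ (2 * k - 2))) * (ennreal (norm (f z)^2) * indicator (Hk k) z) \<partial>lebesgue)"
    unfolding L2sq_def by (rule nn_integral_density) (intro meas_leb W_meas assms)+
  also have "\<dots> = (\<integral>\<^sup>+ z. (indicator (Hk k) z * ennreal (norm (fst z) ^ (2 * k - 2))) * (ennreal (norm (f z)^2) * indicator (Hk k) z) \<partial>lborel)"
    by (rule nn_integral_completion)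
  also have "\<dots> = (\<integral>\<^sup>+ z. ennreal (norm (fst z) ^ (2*k-2)) * (ennreal (norm (f z)^2) * indicator (Hk k) z) \<partial>lborel)"
    by (rule nn_integral_cong) (auto simp: indicator_def)
  finally show ?thesis .
qed

lemma holo_meas:
  assumes "holo2 f (Hk k)"
  shows "(\<lambda>z. ennreal (norm (f z)^2) * indicator (Hk k) z) \<in> borel_measurable borel"
proof -
  have "continuous_on (Hk k) f"
    using assms unfolding holo2_def
    by (intro continuous_at_imp_continuous_on) (metis has_derivative_continuous)
  hence c: "continuous_on (Hk k) (\<lambda>z. norm (f z)^2)" by (intro continuous_intros)
  have "(\<lambda>x. indicator (Hk k) x *\<^sub>R (norm (f x)^2)) \<in> borel_measurable borel"
    by (rule borel_measurable_continuous_on_indicator[OF Hk_sets c])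
  hence "(\<lambda>x. ennreal (indicator (Hk k) x *\<^sub>R (norm (f x)^2))) \<in> borel_measurable borel"
    by measurable
  thus ?thesis by (rule measurable_cong[THEN iffD1, rotated]) (auto simp: indicator_def)
qed

lemma carleson_part:
  "carleson k (density lebesgue (\<lambda>z. indicator (Hk k) z * ennreal (norm (fst z) ^ (2 * k - 2))))"
  unfolding carleson_def
proof (intro exI[of _ 1] ballI)
  fix f assume "f \<in> bergman k"
  hence h: "holo2 f (Hk k)" by (simp add: bergman_def)
  have "L2sq k (density lebesgue (\<lambda>z. indicator (Hk k) z * ennreal (norm (fst z) ^ (2 * k - 2)))) f
     = (\<integral>\<^sup>+ z. ennreal (norm (fst z) ^ (2*k-2)) * (ennreal (norm (f z)^2) * indicator (Hk k) z) \<partial>lborel)"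
    by (rule L2sq_mu[OF holo_meas[OF h]])
  also have "\<dots> \<le> (\<integral>\<^sup>+ z. ennreal (norm (f z)^2) * indicator (Hk k) z \<partial>lborel)"
  proof (rule nn_integral_mono)
    fix z :: "complex \<times> complex"
    show "ennreal (norm (fst z) ^ (2*k-2)) * (ennreal (norm (f z)^2) * indicator (Hk k) z) \<le> ennreal (norm (f z)^2) * indicator (Hk k) z"
    proof (cases "z \<in> Hk k")
      case True
      have "norm (fst z) \<le> 1"
      proof (rule ccontr)
        assume "\<not> norm (fst z) \<le> 1"
        hence "1 \<le> norm (fst z) ^ k" by (intro one_le_power) auto
        thus False using True by (auto simp: Hk_def)
      qed
      hence "norm (fst z) ^ (2*k-2) \<le> 1" by (intro power_le_one) auto
      hence "ennreal (norm (fst z) ^ (2*k-2)) * ennreal (norm (f z)^2) \<le> 1 * ennreal (norm (f z)^2)"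
        by (intro mult_right_mono) auto
      thus ?thesis using True by simp
    qed simp
  qed
  also have "\<dots> = ennreal 1 * L2sq k lebesgue f" by (simp add: L2sq_leb)
  finally show "L2sq k (density lebesgue (\<lambda>z. indicator (Hk k) z * ennreal (norm (fst z) ^ (2 * k - 2)))) f \<le> ennreal 1 * L2sq k lebesgue f" .
qed

lemma norm_ge_zero_pow: "0 \<le> norm (x::'a::real_normed_vector) ^ n"
  by simp

lemma aa_pos: "k \<ge> 1 \<Longrightarrow> 0 < aa k m"
proof -
  assume k: "k \<ge> 1"
  define t :: real where "t = (3/4)^k"
  have t1: "t \<le> 3/4" unfolding t_def using power_decreasing[OF k, of "3/4::real"] by simp
  have t0: "0 < t" unfolding t_def by simp
  have "0 < emeasure lborel (ball (5/8::complex) (1/8)) * (ennreal (t ^ (2*m)) * emeasure lborel (ball (complex_of_real ((1+t)/2)) ((1-t)/2)))"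
    using t0 t1 by (auto simp: ennreal_zero_less_mult_iff intro!: ball_meas_pos)
  also have "\<dots> \<le> aa k m" using aa_lower[OF k, of t m] t1 t_def by simp
  finally show ?thesis .
qed

lemma normF: "0 < a \<Longrightarrow> norm (complex_of_real (1/sqrt a) * w^m)^2 = (1/a) * norm w^(2*m)"
proof -
  assume a: "0 < a"
  have "norm (complex_of_real (1/sqrt a) * w^m) = (1/sqrt a) * norm w ^ m"
    using a by (simp only: norm_mult norm_of_real norm_power) simp
  hence "norm (complex_of_real (1/sqrt a) * w^m)^2 = (1/sqrt a)^2 * (norm w ^ m)^2"
    by (metis power_mult_distrib)
  also have "\<dots> = (1/a) * norm w^(2*m)"
    using a by (simp add: power_divide power_mult[symmetric] mult.commute)
  finally show ?thesis .
qed

lemma holoF: "holo2 (\<lambda>z. c * snd z ^ m) U"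
  unfolding holo2_def
proof
  fix z :: "complex \<times> complex"
  have "((\<lambda>z. c * snd z ^ m) has_derivative (\<lambda>h. c * (of_nat m * snd h * snd z ^ (m-1)))) (at z)"
    by (intro derivative_intros)
  hence "((\<lambda>z. c * snd z ^ m) has_derivative (\<lambda>h. 0 * fst h + (c * of_nat m * snd z ^ (m-1)) * snd h)) (at z)"
    by (rule has_derivative_eq_rhs) (auto simp: fun_eq_iff algebra_simps)
  thus "\<exists>a b. ((\<lambda>z. c * snd z ^ m) has_derivative (\<lambda>h. a * fst h + b * snd h)) (at z)" by blast
qed

lemma F_meas: "(\<lambda>z. ennreal (norm (c * snd z ^ m)^2) * indicator (Hk k) z) \<in> borel_measurable borel"
  by (intro meas_cont continuous_intros Hk_sets)

lemma L2F_leb: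
  assumes "0 < a" "aa k m = ennreal a"
  shows "L2sq k lebesgue (\<lambda>z. complex_of_real (1/sqrt a) * snd z ^ m) = 1"
proof -
  have ha: "0 \<le> 1/a" using assms by simp
  have "L2sq k lebesgue (\<lambda>z. complex_of_real (1/sqrt a) * snd z ^ m)
     = (\<integral>\<^sup>+ z. ennreal (1/a) * (ennreal (norm (snd z) ^ (2*m)) * indicator (Hk k) z) \<partial>lborel)"
    unfolding L2sq_leb using assms(1)
    by (intro nn_integral_cong) (simp only: normF[OF assms(1)] ennreal_mult'[OF ha] mult.assoc)
  also have "\<dots> = ennreal (1/a) * aa k m"
    unfolding aa_def by (rule nn_integral_cmult) (auto intro!: meas_cont continuous_intros Hk_sets)
  also have "\<dots> = 1" using assms by (simp add: ennreal_mult[symmetric])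
  finally show ?thesis .
qed

lemma L2F_mu:
  assumes "0 < a"
  shows "L2sq k (density lebesgue (\<lambda>z. indicator (Hk k) z * ennreal (norm (fst z) ^ (2 * k - 2)))) (\<lambda>z. complex_of_real (1/sqrt a) * snd z ^ m)
     = ennreal (1/a) * mm k m"
proof -
  have ha: "0 \<le> 1/a" using assms by simp
  have "L2sq k (density lebesgue (\<lambda>z. indicator (Hk k) z * ennreal (norm (fst z) ^ (2 * k - 2)))) (\<lambda>z. complex_of_real (1/sqrt a) * snd z ^ m)
     = (\<integral>\<^sup>+ z. ennreal (norm (fst z) ^ (2*k-2)) * (ennreal (norm (complex_of_real (1/sqrt a) * snd z ^ m)^2) * indicator (Hk k) z) \<partial>lborel)"
    by (rule L2sq_mu[OF F_meas])
  also have "\<dots> = (\<integral>\<^sup>+ z. ennreal (1/a) * (ennreal (norm (fst z) ^ (2*k-2) * norm (snd z) ^ (2*m)) * indicator (Hk k) z) \<partial>lborel)"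
    by (intro nn_integral_cong) (simp only: normF[OF assms(1)] ennreal_mult'[OF ha] ennreal_mult'[OF norm_ge_zero_pow]; simp only: ac_simps)
  also have "\<dots> = ennreal (1/a) * mm k m"
    unfolding mm_def by (rule nn_integral_cmult) (auto intro!: meas_cont continuous_intros Hk_sets)
  finally show ?thesis .
qed

lemma F_tendsto:
  assumes k: "k \<ge> 1" and z: "z \<in> Hk k" and a: "\<And>m. 0 < a m" "\<And>m. aa k m = ennreal (a m)"
  shows "(\<lambda>m. complex_of_real (1/sqrt (a m)) * snd z ^ m) \<longlonglongrightarrow> 0"
proof -
  define t0 where "t0 = norm (snd z)"
  have t01: "t0 < 1" "0 \<le> t0" using z by (auto simp: Hk_def t0_def)
  define t where "t = max ((3/4)^k) ((1+t0)/2)"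
  have q1: "((3::real)/4)^k \<le> 3/4" using power_decreasing[OF k, of "3/4::real"] by simp
  have h1: "t0 < (1+t0)/2" "(1+t0)/2 < 1" using t01 by (simp_all add: field_simps)
  have h2: "(1+t0)/2 \<le> t" "(3/4)^k \<le> t" unfolding t_def by auto
  have tl1: "t < 1" unfolding t_def using h1 q1 by auto
  have t1: "(3/4)^k \<le> t" "t < 1" "t0 < t" "0 < t" using t01 h1 h2 tl1 by linarith+
  define \<alpha> where "\<alpha> = measure lborel (ball (5/8::complex) (1/8))"
  define e where "e = measure lborel (ball (complex_of_real ((1+t)/2)) ((1-t)/2))"
  have eE: "emeasure lborel (ball (complex_of_real ((1+t)/2)) ((1-t)/2)) = ennreal e" unfolding e_def by (rule ball_meas_eq)
  have aE: "emeasure lborel (ball (5/8::complex) (1/8)) = ennreal \<alpha>" unfolding \<alpha>_def by (rule ball_meas_eq)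
  have e0: "0 < e" using ball_meas_pos[of "(1-t)/2" "complex_of_real ((1+t)/2)"] t1 eE by auto
  have a0: "0 < \<alpha>" using ball_meas_pos[of "1/8" "5/8::complex"] aE by auto
  have low: "\<alpha> * (t ^ (2*m) * e) \<le> a m" for m
  proof -
    have "ennreal \<alpha> * (ennreal (t ^ (2*m)) * ennreal e) \<le> ennreal (a m)"
      using aa_lower[OF k t1(1) t1(2), of m] aE eE a(2)[of m] by simp
    hence "ennreal (\<alpha> * (t ^ (2*m) * e)) \<le> ennreal (a m)"
      using a0 e0 t1 by (simp add: ennreal_mult)
    thus ?thesis using a(1)[of m] by (simp add: ennreal_le_iff2)
  qed
  have bnd: "norm (complex_of_real (1/sqrt (a m)) * snd z ^ m)^2 \<le> (1/(\<alpha>*e)) * ((t0/t)^2)^m" for m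
  proof -
    have pos: "0 < \<alpha> * (t ^ (2*m) * e)" using a0 e0 t1 by simp
    have "norm (complex_of_real (1/sqrt (a m)) * snd z ^ m)^2 = t0^(2*m) / a m"
      using normF[OF a(1)[of m], of "snd z" m] by (simp add: t0_def)
    also have "\<dots> \<le> t0^(2*m) / (\<alpha> * (t ^ (2*m) * e))"
      using low[of m] pos t01 by (intro divide_left_mono) auto
    also have "\<dots> = (1/(\<alpha>*e)) * ((t0/t)^2)^m"
    proof -
      have pw: "((t0/t)^2)^m = t0^(2*m) / t^(2*m)"
        by (simp add: power_mult[symmetric] power_divide)
      show ?thesis unfolding pw using t1 a0 e0 by (simp add: field_simps)
    qed
    finally show ?thesis .
  qed
  define q where "q = (t0/t)^2"
  have q0: "0 \<le> q" unfolding q_def by simp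
  have "t0/t < 1" "0 \<le> t0/t" using t1 t01 by (simp_all add: divide_less_eq)
  hence q1: "q < 1" unfolding q_def by (metis abs_of_nonneg abs_square_less_1)
  have "norm q < 1" using q0 q1 by simp
  hence "(\<lambda>m. q^m) \<longlonglongrightarrow> 0" by (rule LIMSEQ_power_zero)
  hence lim: "(\<lambda>m. (1/(\<alpha>*e)) * q^m) \<longlonglongrightarrow> 0"
    using tendsto_mult_left[of "\<lambda>m. q^m" 0 sequentially "1/(\<alpha>*e)"] by simp
  define g where "g m = norm (complex_of_real (1/sqrt (a m)) * snd z ^ m)" for m
  have "(\<lambda>m. (g m)^2) \<longlonglongrightarrow> 0"
  proof (rule tendsto_sandwich[of "\<lambda>_. 0" _ _ "\<lambda>m. (1/(\<alpha>*e)) * q^m"])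
    show "\<forall>\<^sub>F m in sequentially. 0 \<le> (g m)^2" by simp
    show "\<forall>\<^sub>F m in sequentially. (g m)^2 \<le> (1/(\<alpha>*e)) * q^m"
      using bnd unfolding g_def q_def by (intro always_eventually) blast
  qed (use lim in auto)
  hence "(\<lambda>m. sqrt ((g m)^2)) \<longlonglongrightarrow> sqrt 0"
    by (rule tendsto_real_sqrt)
  moreover have "\<And>m. sqrt ((g m)^2) = g m" unfolding g_def by (rule real_sqrt_abs[THEN trans]) simp
  ultimately have "g \<longlonglongrightarrow> 0" by simp
  hence "(\<lambda>m. norm (complex_of_real (1/sqrt (a m)) * snd z ^ m)) \<longlonglongrightarrow> 0" unfolding g_def .
  thus ?thesis by (rule tendsto_norm_zero_cancel)
qed

theorem mainTheorem11:
  fixes k :: nat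
  assumes "k \<ge> 1"
  defines "\<mu> \<equiv> density lebesgue (\<lambda>z. indicator (Hk k) z * ennreal (norm (fst z) ^ (2 * k - 2)))"
  shows "carleson k \<mu> \<and> \<not> vanishing_carleson k \<mu>"
proof
  show "carleson k \<mu>" unfolding \<mu>_def by (rule carleson_part)
next
  show "\<not> vanishing_carleson k \<mu>"
  proof
    assume vc: "vanishing_carleson k \<mu>"
    obtain K N0 where K: "K < \<infinity>" "\<forall>m\<ge>N0. aa k m \<le> K * mm k m" using key[OF assms(1)] by blast
    define a where "a m = enn2real (aa k m)" for m
    have aE: "aa k m = ennreal (a m)" for m
      unfolding a_def using aa_finite[OF assms(1), of m] by simp
    have a0: "0 < a m" for m
      using aa_pos[OF assms(1), of m] aE[of m] by simp
    define F where "F n = (\<lambda>z::complex\<times>complex. complex_of_real (1/sqrt (a (n+N0))) * snd z ^ (n+N0))" for n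
    have Fb: "\<forall>n. F n \<in> bergman k \<and> L2sq k lebesgue (F n) \<le> 1"
    proof
      fix n
      have l: "L2sq k lebesgue (F n) = 1" unfolding F_def by (rule L2F_leb[OF a0 aE])
      have h: "holo2 (F n) (Hk k)" unfolding F_def by (rule holoF)
      show "F n \<in> bergman k \<and> L2sq k lebesgue (F n) \<le> 1"
        unfolding bergman_def using l h by simp
    qed
    have Fmu: "1 \<le> K * L2sq k \<mu> (F n)" for n
    proof -
      define m where "m = n + N0"
      have "L2sq k \<mu> (F n) = ennreal (1 / a m) * mm k m"
        unfolding \<mu>_def F_def m_def by (rule L2F_mu[OF a0])
      have "1 = ennreal (1 / a m) * aa k m"
        using a0[of m] by (simp add: aE ennreal_mult[symmetric])
      also have "\<dots> \<le> ennreal (1 / a m) * (K * mm k m)"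
        using K(2) m_def by (intro mult_left_mono) auto
      also have "\<dots> = K * L2sq k \<mu> (F n)"
        using \<open>L2sq k \<mu> (F n) = ennreal (1 / a m) * mm k m\<close> by (simp add: ac_simps)
      finally show ?thesis .
    qed
    have Flim: "(\<lambda>n. F n z) \<longlonglongrightarrow> 0" if z: "z \<in> Hk k" for z
    proof -
      have "(\<lambda>m. complex_of_real (1/sqrt (a m)) * snd z ^ m) \<longlonglongrightarrow> 0"
        by (rule F_tendsto[OF assms(1) z a0 aE])
      from LIMSEQ_ignore_initial_segment[OF this, of N0] show ?thesis
        unfolding F_def by simp
    qed
    have "(\<forall>n. F n \<in> bergman k \<and> L2sq k lebesgue (F n) \<le> 1) \<longrightarrow>
        (\<exists>r::nat \<Rightarrow> nat. strict_mono r \<and>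
           (\<forall>e::real>0. \<exists>N. \<forall>m\<ge>N. \<forall>n\<ge>N. L2sq k \<mu> (\<lambda>z. F (r m) z - F (r n) z) < ennreal e))"
      using vc unfolding vanishing_carleson_def by (rule conjunct2[THEN spec])
    hence "\<exists>r::nat \<Rightarrow> nat. strict_mono r \<and>
           (\<forall>e::real>0. \<exists>N. \<forall>m\<ge>N. \<forall>n\<ge>N. L2sq k \<mu> (\<lambda>z. F (r m) z - F (r n) z) < ennreal e)"
      using Fb by (rule mp)
    then obtain r :: "nat \<Rightarrow> nat" where r: "strict_mono r" and
      cau: "\<forall>e::real>0. \<exists>N. \<forall>m\<ge>N. \<forall>n\<ge>N. L2sq k \<mu> (\<lambda>z. F (r m) z - F (r n) z) < ennreal e"
      by blast
    from K(1) obtain Kr where Kr: "K = ennreal Kr" "0 \<le> Kr" by (cases K) auto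
    define e where "e = 1 / (Kr + 1)"
    have e0: "0 < e" unfolding e_def using Kr by simp
    obtain N where N: "\<And>m n. m \<ge> N \<Longrightarrow> n \<ge> N \<Longrightarrow> L2sq k \<mu> (\<lambda>z. F (r m) z - F (r n) z) < ennreal e"
      using cau e0 by meson
    define G where "G m z = ennreal (norm (F (r N) z - F (r m) z)^2) * indicator (Hk k) z" for m z
    have pt: "(\<lambda>m. G m z) \<longlonglongrightarrow> ennreal (norm (F (r N) z)^2) * indicator (Hk k) z" for z
    proof (cases "z \<in> Hk k")
      case True
      have "((\<lambda>n. F n z) \<circ> r) \<longlonglongrightarrow> 0" by (rule LIMSEQ_subseq_LIMSEQ[OF Flim[OF True] r])
      hence "(\<lambda>m. F (r m) z) \<longlonglongrightarrow> 0" by (simp add: comp_def)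
      hence "(\<lambda>m. ennreal (norm (F (r N) z - F (r m) z)^2)) \<longlonglongrightarrow> ennreal (norm (F (r N) z - 0)^2)"
        by (intro tendsto_intros)
      thus ?thesis using True by (simp add: G_def)
    qed (simp add: G_def)
    have Gm: "G m \<in> borel_measurable \<mu>" for m
    proof -
      have "G m \<in> borel_measurable borel"
        unfolding G_def F_def by (intro meas_cont continuous_intros Hk_sets)
      thus ?thesis unfolding \<mu>_def by (simp add: meas_leb)
    qed
    have "L2sq k \<mu> (F (r N)) = (\<integral>\<^sup>+ z. liminf (\<lambda>m. G m z) \<partial>\<mu>)"
      unfolding L2sq_def
      by (intro nn_integral_cong lim_imp_Liminf[symmetric] pt) simp
    also have "\<dots> \<le> liminf (\<lambda>m. integral\<^sup>N \<mu> (G m))"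
      by (rule nn_integral_liminf[OF Gm])
    also have "\<dots> \<le> liminf (\<lambda>m. ennreal e)"
    proof (rule Liminf_mono)
      show "\<forall>\<^sub>F m in sequentially. integral\<^sup>N \<mu> (G m) \<le> ennreal e"
        unfolding eventually_sequentially
      proof (intro exI allI impI)
        fix m assume "N \<le> m"
        have "integral\<^sup>N \<mu> (G m) = L2sq k \<mu> (\<lambda>z. F (r N) z - F (r m) z)"
          unfolding L2sq_def G_def ..
        also have "\<dots> < ennreal e" using N[of N m] \<open>N \<le> m\<close> by simp
        finally show "integral\<^sup>N \<mu> (G m) \<le> ennreal e" by simp
      qed
    qed
    also have "\<dots> = ennreal e" by (simp add: Liminf_const)
    finally have le: "L2sq k \<mu> (F (r N)) \<le> ennreal e" .
    have "1 \<le> K * L2sq k \<mu> (F (r N))" by (rule Fmu)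
    also have "\<dots> \<le> ennreal Kr * ennreal e" unfolding Kr(1) using le by (rule mult_left_mono) simp
    also have "\<dots> = ennreal (Kr / (Kr + 1))" using Kr e0 by (simp add: ennreal_mult[symmetric] e_def)
    finally have "ennreal 1 \<le> ennreal (Kr / (Kr + 1))" by simp
    hence "1 \<le> Kr / (Kr + 1)" using Kr by (subst (asm) ennreal_le_iff) auto
    moreover have "Kr / (Kr + 1) < 1" using Kr by simp
    ultimately show False by simp
  qed
qed

end
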